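(* Let $N\ge0$ be a fixed integer. Then, as $\nu\to+\infty$, $$\frac{2^{\nu-2N}\Gamma\left(\nu-N+\frac12\right)}{\Gamma\left(N+\frac12\right)}\int_0^{+\infty}\frac{t^{2N-\nu}J_\nu(t)}{1+(t/(\lambda\nu))^2}\,dt=\mathcal O(1),$$ uniformly with respect to $\lambda\in(0,\infty)$.
   Context: $J_\nu$ is the Bessel function of the first kind; $\nu$ is real and positive. *)

theory Defs
  imports "HOL-Analysis.Analysis"
begin

definition besselJ :: "real \<Rightarrow> real \<Rightarrow> real" where
  "besselJ \<nu> t = (\<Sum>k. (-1) ^ k / (fact k * Gamma (real k + \<nu> + 1)) * (t / 2) ^ (2 * k) * (t / 2) powr \<nu>)"

end

theory Submission
  imports Defs "HOL-Probability.Distributions"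
begin


lemma pos_not_nonpos_Int: "(x::real) > 0 \<Longrightarrow> x \<notin> \<int>\<^sub>\<le>\<^sub>0"
  using nonpos_Ints_nonpos by fastforce

lemma Gamma_plus1_pos: "(x::real) > 0 \<Longrightarrow> Gamma (x + 1) = x * Gamma x"
  using Gamma_plus1[of x] pos_not_nonpos_Int by auto

lemma gamma_half: "Gamma (real m + 1/2) = sqrt pi * fact (2*m) / (4^m * fact m)"
proof (induction m)
  case 0 then show ?case by (simp add: Gamma_one_half_real)
next
  case (Suc m)
  have "Gamma (real (Suc m) + 1/2) = (real m + 1/2) * Gamma (real m + 1/2)"
    using Gamma_plus1_pos[of "real m + 1/2"] by (simp add: algebra_simps)
  also have "\<dots> = sqrt pi * fact (2*Suc m) / (4^Suc m * fact (Suc m))"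
  proof -
    have f: "fact (2*Suc m) = (2*real m + 2) * (2*real m + 1) * (fact (2*m) :: real)"
      by (simp add: algebra_simps)
    have p: "(fact m :: real) > 0" "(4::real)^m > 0" by auto
    show ?thesis unfolding Suc f using p by (simp add: divide_simps) (simp add: algebra_simps)
  qed
  finally show ?case .
qed

lemma gauss_moment:
  assumes b: "b > 0"
  shows "has_bochner_integral lborel (\<lambda>t. indicator {0<..} t * (t^(2*m) * exp(-b*t\<^sup>2)))
           (Gamma (real m + 1/2) / (2 * b powr (real m + 1/2)))"
proof -
  define F where "F x = indicator {0..} x * (exp(-x\<^sup>2)*x^(2*m))" for x :: real
  have G: "has_bochner_integral lborel F (sqrt pi / 2 * (fact (2*m) / (2^(2*m) * fact m)))"
    using gaussian_moment_even_pos[of m] unfolding F_def by simp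
  have sb: "sqrt b > 0" using b by simp
  have sq: "(sqrt b ^ m)\<^sup>2 = b^m"
  proof -
    have "(sqrt b ^ m)\<^sup>2 = (sqrt b ^ 2)^m" by (simp add: power_mult[symmetric] mult.commute)
    then show ?thesis using b by simp
  qed
  have Fs: "F (sqrt b * x) = b^m * (indicator {0..} x * (x^(2*m) * exp(-b*x\<^sup>2)))" for x
    using sb b sq by (auto simp: F_def indicator_def zero_le_mult_iff power_mult_distrib power_mult
        real_sqrt_pow2 mult_ac)
  have iF: "integrable lborel F" using G by (simp add: has_bochner_integral_iff)
  have i2: "integrable lborel (\<lambda>x. F (0 + sqrt b * x))"
    using lborel_integrable_real_affine[OF iF, of "sqrt b" 0] sb by simp
  have e2: "integral\<^sup>L lborel F = sqrt b * integral\<^sup>L lborel (\<lambda>x. F (0 + sqrt b * x))"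
    using lborel_integral_real_affine[of "sqrt b" F 0] sb by simp
  define H where "H x = indicator {0..} x * (x^(2*m) * exp(-b*x\<^sup>2))" for x :: real
  have iH: "integrable lborel H"
  proof -
    have "integrable lborel (\<lambda>x. (1/b^m) * F (0 + sqrt b * x))" using i2 by simp
    also have "(\<lambda>x. (1/b^m) * F (0 + sqrt b * x)) = H" using b by (simp add: Fs H_def fun_eq_iff)
    finally show ?thesis .
  qed
  have eH: "integral\<^sup>L lborel H = sqrt pi / 2 * (fact (2*m) / (2^(2*m) * fact m)) / (sqrt b * b^m)"
  proof -
    have "integral\<^sup>L lborel (\<lambda>x. F (0 + sqrt b * x)) = b^m * integral\<^sup>L lborel H"
      by (simp add: Fs H_def[abs_def])
    with e2 G[THEN has_bochner_integral_integral_eq] sb b show ?thesis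
      by (simp add: field_simps)
  qed
  have val: "sqrt pi / 2 * (fact (2*m) / (2^(2*m) * fact m)) / (sqrt b * b^m)
     = Gamma (real m + 1/2) / (2 * b powr (real m + 1/2))"
  proof -
    have "b powr (real m + 1/2) = b^m * sqrt b" using b
      by (simp add: powr_add powr_half_sqrt powr_realpow)
    moreover have "(2::real)^(2*m) = 4^m" by (simp add: power_mult)
    ultimately show ?thesis unfolding gamma_half using b by (simp add: field_simps)
  qed
  have HB: "has_bochner_integral lborel H (Gamma (real m + 1/2) / (2 * b powr (real m + 1/2)))"
    using iH eH val by (simp add: has_bochner_integral_iff)
  show ?thesis
  proof (subst has_bochner_integral_cong_AE[where g=H])
    show "AE x in lborel. indicator {0<..} x * (x ^ (2 * m) * exp (- b * x\<^sup>2)) = H x"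
      using AE_lborel_singleton[of 0] by eventually_elim (auto simp: H_def indicator_def)
  qed (use HB in \<open>auto simp: H_def\<close>)
qed

lemma gamma_scaled:
  fixes z a :: real
  assumes z: "z > 0" and a: "a > 0"
  shows "has_bochner_integral lborel (\<lambda>u. indicator {0<..} u * (z powr a * u powr (a-1) * exp(-z*u))) (Gamma a)"
proof -
  define F where "F t = indicator {0..} t * t powr (a - 1) / exp t" for t :: real
  have "(\<integral>\<^sup>+t. ennreal (F t) \<partial>lborel) = ennreal (Gamma a)"
    using Gamma_conv_nn_integral_real[OF a] by (simp add: F_def)
  then have iF: "integrable lborel F" and eF: "integral\<^sup>L lborel F = Gamma a"
    using nn_integral_eq_integrable[of F lborel "Gamma a"] a
    by (auto simp: F_def[abs_def] indicator_def)
  have i2: "integrable lborel (\<lambda>x. F (0 + z * x))"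
    using lborel_integrable_real_affine[OF iF, of z 0] z by simp
  have e2: "integral\<^sup>L lborel F = z * integral\<^sup>L lborel (\<lambda>x. F (0 + z * x))"
    using lborel_integral_real_affine[of z F 0] z by simp
  have eq: "z * F (z * x) = indicator {0<..} x * (z powr a * x powr (a-1) * exp(-z*x))" for x
  proof (cases "x > 0")
    case True
    have "z powr a = z * z powr (a - 1)" using z by (simp add: powr_diff)
    then show ?thesis using True z
      by (simp add: F_def indicator_def powr_mult exp_minus field_simps)
  next
    case False
    then show ?thesis using z by (auto simp: F_def indicator_def zero_le_mult_iff)
  qed
  have "integrable lborel (\<lambda>x. z * F (z * x))" using i2 by simp
  moreover have "integral\<^sup>L lborel (\<lambda>x. z * F (z * x)) = Gamma a" using e2 eF by simp
  ultimately show ?thesis unfolding eq by (simp add: has_bochner_integral_iff)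
qed

lemma beta_series_summable:
  fixes z a \<beta> :: real
  assumes z: "z \<ge> 0" and a: "a > 0" and b: "\<beta> > 0"
  shows "summable (\<lambda>k. z^k / fact k * Beta (a + real k) \<beta>)"
proof (rule summable_comparison_test)
  show "summable (\<lambda>k. Beta a \<beta> * (inverse (fact k) * z^k))"
    by (intro summable_mult summable_exp)
  show "\<exists>N. \<forall>n\<ge>N. norm (z ^ n / fact n * Beta (a + real n) \<beta>) \<le> Beta a \<beta> * (inverse (fact n) * z ^ n)"
  proof (intro exI allI impI)
    fix n :: nat
    have B: "Beta (a + real n) \<beta> \<le> Beta a \<beta>" using a b by (intro Beta_real_mono) auto
    have B0: "Beta (a + real n) \<beta> \<ge> 0"
      using a b by (simp add: Beta_def)
    show "norm (z ^ n / fact n * Beta (a + real n) \<beta>) \<le> Beta a \<beta> * (inverse (fact n) * z ^ n)"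
      using mult_left_mono[OF B, of "z^n"] B0 z by (simp add: abs_mult divide_inverse mult_ac)
  qed
qed

lemma euler_sums:
  fixes z a \<beta> :: real
  assumes z: "z > 0" and a: "a > 0" and b: "\<beta> > 0"
  shows "(\<lambda>k. (-z)^k / fact k * Beta (a + real k) \<beta>) sums
    (LINT u|lborel. indicator {0..1} u * (exp(-z*u) * u powr (a-1) * (1-u) powr (\<beta>-1)))"
proof -
  define f where "f k u = indicator {0..1} u * ((-z)^k / fact k * (u powr (a + real k - 1) * (1-u) powr (\<beta>-1)))"
    for k :: nat and u :: real
  have intk: "integrable lborel (\<lambda>u. indicator {0..1} u * (u powr (a + real k - 1) * (1-u) powr (\<beta>-1)))" for k
    using integrable_Beta[of "a + real k" \<beta>] a b by (simp add: set_integrable_def)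
  have valk: "(LINT u|lborel. indicator {0..1} u * (u powr (a + real k - 1) * (1-u) powr (\<beta>-1))) = Beta (a + real k) \<beta>" for k
  proof -
    have "(LINT u:{0..1}|lborel. (u powr (a + real k - 1) * (1-u) powr (\<beta>-1))) = 
          integral {0..1} (\<lambda>u. u powr (a + real k - 1) * (1-u) powr (\<beta>-1))"
      using set_borel_integral_eq_integral(2)[OF integrable_Beta[of "a + real k" \<beta>]] a b by simp
    also have "\<dots> = Beta (a + real k) \<beta>"
      using has_integral_Beta_real[of "a + real k" \<beta>] a b by (simp add: integral_unique)
    finally show ?thesis by (simp add: set_lebesgue_integral_def)
  qed
  have fi: "integrable lborel (f k)" for k
    using integrable_mult_right[OF intk[of k], of "(-z)^k / fact k"] unfolding f_def
    by (simp add: mult_ac)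
  have fv: "integral\<^sup>L lborel (f k) = (-z)^k / fact k * Beta (a + real k) \<beta>" for k
  proof -
    have "integral\<^sup>L lborel (f k) = (-z)^k / fact k * (LINT u|lborel. indicator {0..1} u * (u powr (a + real k - 1) * (1-u) powr (\<beta>-1)))"
      unfolding f_def by (subst integral_mult_right_zero[symmetric]) (simp add: mult_ac)
    then show ?thesis using valk by simp
  qed
  have fnorm: "integral\<^sup>L lborel (\<lambda>u. norm (f k u)) = z^k / fact k * Beta (a + real k) \<beta>" for k
  proof -
    have "(\<lambda>u. norm (f k u)) = (\<lambda>u. z^k / fact k * (indicator {0..1} u * (u powr (a + real k - 1) * (1-u) powr (\<beta>-1))))"
      using z by (auto simp: f_def fun_eq_iff abs_mult power_abs indicator_def)
    then show ?thesis using valk by simp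
  qed
  have pw: "(\<lambda>k. f k u) sums (indicator {0..1} u * (exp(-z*u) * u powr (a-1) * (1-u) powr (\<beta>-1)))" for u
  proof (cases "u \<in> {0..1}")
    case False then show ?thesis by (simp add: f_def)
  next
    case True
    have e: "(\<lambda>k. (-z*u)^k / fact k) sums exp (-z*u)"
      using exp_converges[of "-z*u"] by (simp add: divide_inverse mult_ac)
    have "(\<lambda>k. (-z*u)^k / fact k * (u powr (a-1) * (1-u) powr (\<beta>-1))) sums (exp(-z*u) * (u powr (a-1) * (1-u) powr (\<beta>-1)))"
      by (rule sums_mult2[OF e])
    moreover have "f k u = (-z*u)^k / fact k * (u powr (a-1) * (1-u) powr (\<beta>-1))" for k
    proof (cases "u = 0")
      case True then show ?thesis by (simp add: f_def)
    next
      case False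
      with \<open>u \<in> {0..1}\<close> have "u > 0" by auto
      then have "u powr (a + real k - 1) = u^k * u powr (a - 1)"
        by (simp add: powr_add[symmetric] powr_realpow[symmetric] algebra_simps)
      moreover have "(-z*u)^k = (-z)^k * u^k" using power_mult_distrib[of "-z" u k] by simp
      ultimately show ?thesis using True by (simp add: f_def mult_ac)
    qed
    ultimately show ?thesis using True by (simp add: mult_ac)
  qed
  have pwn: "summable (\<lambda>k. norm (f k u))" for u
  proof (cases "u \<in> {0..1}")
    case False then show ?thesis by (simp add: f_def)
  next
    case True
    have "summable (\<lambda>k. \<bar>(z*u)^k / fact k * (u powr (a-1) * (1-u) powr (\<beta>-1))\<bar>)"
      using summable_mult2[OF summable_exp[of "z*u"], of "u powr (a-1) * (1-u) powr (\<beta>-1)"] True z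
      by (simp add: abs_mult divide_inverse mult_ac)
    moreover have "norm (f k u) = \<bar>(z*u)^k / fact k * (u powr (a-1) * (1-u) powr (\<beta>-1))\<bar>" for k
    proof (cases "u = 0")
      case True then show ?thesis by (simp add: f_def)
    next
      case False
      with \<open>u \<in> {0..1}\<close> have "u > 0" by auto
      then have "u powr (a + real k - 1) = u^k * u powr (a - 1)"
        by (simp add: powr_add[symmetric] powr_realpow[symmetric] algebra_simps)
      then show ?thesis using True by (simp add: f_def power_mult_distrib abs_mult power_abs mult_ac)
    qed
    ultimately show ?thesis by simp
  qed
  have sn: "summable (\<lambda>k. integral\<^sup>L lborel (\<lambda>u. norm (f k u)))"
    unfolding fnorm using beta_series_summable[of z a \<beta>] z a b by simp
  have "(\<lambda>k. integral\<^sup>L lborel (f k)) sums (LINT u|lborel. (\<Sum>k. f k u))"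
    by (rule sums_integral[OF fi _ sn]) (use pwn in auto)
  moreover have "(\<lambda>u. \<Sum>k. f k u) = (\<lambda>u. indicator {0..1} u * (exp(-z*u) * u powr (a-1) * (1-u) powr (\<beta>-1)))"
    using pw by (simp add: sums_iff fun_eq_iff)
  ultimately show ?thesis unfolding fv by simp
qed

lemma euler_bound:
  fixes z a \<beta> :: real
  assumes z: "z > 0" and a: "a > 0" and b: "\<beta> \<ge> 1"
  defines "E \<equiv> (LINT u|lborel. indicator {0..1} u * (exp(-z*u) * u powr (a-1) * (1-u) powr (\<beta>-1)))"
  shows "0 \<le> z powr a * E" "z powr a * E \<le> Gamma a"
proof -
  define g where "g u = indicator {0..1} u * (exp(-z*u) * u powr (a-1) * (1-u) powr (\<beta>-1))" for u :: real
  define h where "h u = indicator {0<..} u * (u powr (a-1) * exp(-z*u))" for u :: real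
  have hG: "has_bochner_integral lborel (\<lambda>u. z powr a * h u) (Gamma a)"
    using gamma_scaled[OF z a] by (simp add: h_def mult_ac)
  have ih: "integrable lborel h"
  proof -
    have "integrable lborel (\<lambda>u. (1 / z powr a) * (z powr a * h u))"
      using hG by (intro integrable_mult_right) (simp add: has_bochner_integral_iff)
    then show ?thesis using z by simp
  qed
  have eh: "integral\<^sup>L lborel h = Gamma a / z powr a"
  proof -
    have "z powr a * integral\<^sup>L lborel h = Gamma a"
      using hG by (simp add: has_bochner_integral_iff)
    then show ?thesis using z by (simp add: field_simps)
  qed
  have gle: "0 \<le> g u \<and> g u \<le> h u" for u
  proof (cases "u \<in> {0<..1}")
    case True
    have "(1-u) powr (\<beta>-1) \<le> 1 powr (\<beta>-1)"
      using True b by (intro powr_mono2) auto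
    then have "(1-u) powr (\<beta>-1) \<le> 1" by simp
    then show ?thesis using True
      by (auto simp: g_def h_def indicator_def mult_ac intro!: mult_left_le)
  next
    case False
    then show ?thesis by (auto simp: g_def h_def indicator_def)
  qed
  have gm: "g \<in> borel_measurable lborel" unfolding g_def by measurable
  have ig: "integrable lborel g"
    by (rule Bochner_Integration.integrable_bound[OF ih gm]) (use gle in \<open>auto intro!: AE_I2 simp: abs_of_nonneg order_trans[OF _ gle[THEN conjunct2]]\<close>)
  have E: "E = integral\<^sup>L lborel g" unfolding E_def g_def[abs_def] ..
  have "0 \<le> E" unfolding E using gle by (simp add: Bochner_Integration.integral_nonneg)
  then show "0 \<le> z powr a * E" by simp
  have "E \<le> integral\<^sup>L lborel h" unfolding E using gle by (intro integral_mono ig ih) auto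
  then have "z powr a * E \<le> z powr a * (Gamma a / z powr a)" unfolding eh
    by (intro mult_left_mono) auto
  then show "z powr a * E \<le> Gamma a" using z by simp
qed



lemma Gamma_ge_1: "(x::real) \<ge> 2 \<Longrightarrow> Gamma x \<ge> 1"
proof -
  assume "x \<ge> 2"
  then consider "x = 2" | "x > 2" by linarith
  then show ?thesis
  proof cases
    case 1
    have "Gamma (2::real) = 1" using Gamma_fact[of 1, where 'a=real] by simp
    then show ?thesis using 1 by simp
  next
    case 2
    have "Gamma (2::real) < Gamma x" using 2 by (intro Gamma_real_strict_mono) auto
    moreover have "Gamma (2::real) = 1" using Gamma_fact[of 1, where 'a=real] by simp
    ultimately show ?thesis by simp
  qed
qed

lemma bessel_term_sums:
  fixes \<nu> t :: real
  assumes \<nu>: "\<nu> \<ge> 1" and t: "t > 0"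
  shows "summable (\<lambda>k. \<bar>(-1) ^ k / (fact k * Gamma (real k + \<nu> + 1)) * (t / 2) ^ (2 * k) * (t / 2) powr \<nu>\<bar>)"
proof (rule summable_comparison_test)
  show "summable (\<lambda>k. (t/2) powr \<nu> * (inverse (fact k) * (t\<^sup>2/4)^k))"
    by (intro summable_mult summable_exp)
  show "\<exists>N. \<forall>n\<ge>N. norm \<bar>(-1) ^ n / (fact n * Gamma (real n + \<nu> + 1)) * (t / 2) ^ (2 * n) * (t / 2) powr \<nu>\<bar>
      \<le> (t/2) powr \<nu> * (inverse (fact n) * (t\<^sup>2/4)^n)"
  proof (intro exI allI impI)
    fix n :: nat
    have g: "Gamma (real n + \<nu> + 1) \<ge> 1" using \<nu> by (intro Gamma_ge_1) auto
    have e: "(t/2)^(2*n) = (t\<^sup>2/4)^n" by (simp add: power_mult power_divide)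
    define X where "X = (t/2)^(2*n)"
    define Y where "Y = (t/2) powr \<nu>"
    have X0: "X \<ge> 0" "Y \<ge> 0" using t by (auto simp: X_def Y_def)
    have "norm \<bar>(-1) ^ n / (fact n * Gamma (real n + \<nu> + 1)) * (t / 2) ^ (2 * n) * (t / 2) powr \<nu>\<bar>
       = (X * Y) / (fact n * Gamma (real n + \<nu> + 1))"
      using g X0 unfolding X_def[symmetric] Y_def[symmetric] by (simp add: abs_mult power_abs)
    also have "\<dots> \<le> (X * Y) / (fact n * 1)"
    proof (rule divide_left_mono)
      have "fact n * 1 \<le> fact n * Gamma (real n + \<nu> + 1)"
        using g by (intro mult_left_mono) auto
      then show "fact n * 1 \<le> fact n * Gamma (real n + \<nu> + 1)" .
      show "0 \<le> X * Y" using X0 by simp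
      show "0 < fact n * Gamma (real n + \<nu> + 1) * (fact n * 1)"
        using g by (intro mult_pos_pos) auto
    qed
    also have "\<dots> = Y * (inverse (fact n) * X)" by (simp add: divide_inverse mult_ac)
    also have "\<dots> = (t/2) powr \<nu> * (inverse (fact n) * (t\<^sup>2/4)^n)"
      unfolding Y_def X_def e ..
    finally show "norm \<bar>(-1) ^ n / (fact n * Gamma (real n + \<nu> + 1)) * (t / 2) ^ (2 * n) * (t / 2) powr \<nu>\<bar>
      \<le> (t/2) powr \<nu> * (inverse (fact n) * (t\<^sup>2/4)^n)" .
  qed
qed

lemma key:
  fixes N :: nat and \<nu> b :: real
  assumes \<nu>: "\<nu> \<ge> real N + 1" and b: "b > 0"
  shows "\<bar>2 powr (\<nu> - 2 * real N) * Gamma (\<nu> - real N + 1/2) / Gamma (real N + 1/2) *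
     (LINT t|lborel. indicator {0<..} t * (t powr (2 * real N - \<nu>) * besselJ \<nu> t * exp (- b * t\<^sup>2)))\<bar> \<le> 1"
proof -
  define a where "a = real N + 1/2"
  define \<beta> where "\<beta> = \<nu> - real N + 1/2"
  define z where "z = 1/(4*b)"
  have a0: "a > 0" and \<beta>1: "\<beta> \<ge> 1" and z0: "z > 0" and \<nu>1: "\<nu> \<ge> 1"
    using \<nu> b by (auto simp: a_def \<beta>_def z_def)
  define c where "c k = (-1)^k / (fact k * Gamma (real k + \<nu> + 1)) / 4^k / 2 powr \<nu>" for k :: nat
  define g where "g k t = indicator {0<..} t * (c k * (t^(2*(N+k)) * exp(-b*t\<^sup>2)))" for k t
  define K where "K = 2 powr (2*real N - \<nu>) * z powr a / Gamma \<beta>"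
  define s where "s k = z^k / fact k * Beta (a + real k) \<beta>" for k
  define E where "E = (LINT u|lborel. indicator {0..1} u * (exp(-z*u) * u powr (a-1) * (1-u) powr (\<beta>-1)))"
  define G where "G = (LINT t|lborel. indicator {0<..} t * (t powr (2 * real N - \<nu>) * besselJ \<nu> t * exp (- b * t\<^sup>2)))"
  have K0: "K \<ge> 0" using \<beta>1 by (simp add: K_def)
  have s0: "s k \<ge> 0" for k using a0 \<beta>1 z0 by (simp add: s_def Beta_def)
  have gm: "has_bochner_integral lborel (\<lambda>t. indicator {0<..} t * (t^(2*(N+k)) * exp(-b*t\<^sup>2)))
              (Gamma (a + real k) / (2 * b powr (a + real k)))" for k
    using gauss_moment[OF b, of "N+k"] by (simp add: a_def algebra_simps)
  have F1: "Gamma (a + real k) = Beta (a + real k) \<beta> * Gamma (real k + \<nu> + 1) / Gamma \<beta>" for k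
  proof -
    have "Gamma (a + real k) * Gamma \<beta> = Beta (a + real k) \<beta> * Gamma (a + real k + \<beta>)"
      using a0 \<beta>1 by (intro Gamma_Gamma_Beta pos_not_nonpos_Int) auto
    moreover have "Gamma (a + real k + \<beta>) = Gamma (real k + \<nu> + 1)"
      by (rule arg_cong[where f=Gamma]) (simp add: a_def \<beta>_def)
    moreover have "Gamma \<beta> > 0" using \<beta>1 by simp
    ultimately show ?thesis by (simp add: field_simps)
  qed
  have F2: "b powr (a + real k) = b powr a * b^k" for k
    using b by (simp add: powr_add powr_realpow)
  have F3: "z powr a = 1 / (2 * 4^N * b powr a)"
  proof -
    have "z powr a = 1 / ((4*b) powr a)" using b by (simp add: z_def powr_divide)
    also have "(4*b) powr a = 4 powr a * b powr a" using b by (simp add: powr_mult)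
    also have "(4::real) powr a = 4^N * 2"
      by (simp add: a_def powr_add powr_realpow powr_half_sqrt)
    finally show ?thesis by (simp add: mult_ac)
  qed
  have F4: "2 powr (2*real N - \<nu>) = 4^N / 2 powr \<nu>"
  proof -
    have "(2::real) powr (2*real N) = 2^(2*N)" by (simp add: powr_realpow[symmetric])
    then show ?thesis by (simp add: powr_diff power_mult)
  qed
  have F5: "z^k = 1 / (4^k * b^k)" for k by (simp add: z_def power_divide power_mult_distrib)
  have cid: "c k * (Gamma (a + real k) / (2 * b powr (a + real k))) = (-1)^k * K * s k" for k
  proof -
    have pos: "Gamma \<beta> > 0" "Gamma (real k + \<nu> + 1) > 0" "b powr a > 0" "(2::real) powr \<nu> > 0"
      using \<beta>1 \<nu>1 b by auto
    show ?thesis unfolding c_def K_def s_def F1 F2 F3 F4 F5 using pos b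
      by (simp add: field_simps)
  qed
  have gi: "integrable lborel (g k)" and gv: "integral\<^sup>L lborel (g k) = (-1)^k * K * s k" for k
  proof -
    have h: "has_bochner_integral lborel (\<lambda>t. c k * (indicator {0<..} t * (t^(2*(N+k)) * exp(-b*t\<^sup>2))))
              (c k * (Gamma (a + real k) / (2 * b powr (a + real k))))"
      by (rule has_bochner_integral_mult_right[OF gm])
    have "g k = (\<lambda>t. c k * (indicator {0<..} t * (t^(2*(N+k)) * exp(-b*t\<^sup>2))))"
      by (simp add: g_def fun_eq_iff mult_ac)
    then show "integrable lborel (g k)" "integral\<^sup>L lborel (g k) = (-1)^k * K * s k"
      using h cid[of k] by (simp_all add: has_bochner_integral_iff)
  qed
  have gn: "integral\<^sup>L lborel (\<lambda>t. norm (g k t)) = K * s k" for k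
  proof -
    have h: "has_bochner_integral lborel (\<lambda>t. \<bar>c k\<bar> * (indicator {0<..} t * (t^(2*(N+k)) * exp(-b*t\<^sup>2))))
              (\<bar>c k\<bar> * (Gamma (a + real k) / (2 * b powr (a + real k))))"
      by (rule has_bochner_integral_mult_right[OF gm])
    have "(\<lambda>t. norm (g k t)) = (\<lambda>t. \<bar>c k\<bar> * (indicator {0<..} t * (t^(2*(N+k)) * exp(-b*t\<^sup>2))))"
      by (auto simp: g_def fun_eq_iff abs_mult indicator_def)
    moreover have "\<bar>c k\<bar> * (Gamma (a + real k) / (2 * b powr (a + real k))) = K * s k"
    proof -
      have "Gamma (a + real k) / (2 * b powr (a + real k)) \<ge> 0" using a0 b by simp
      then have "\<bar>c k\<bar> * (Gamma (a + real k) / (2 * b powr (a + real k))) 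
          = \<bar>c k * (Gamma (a + real k) / (2 * b powr (a + real k)))\<bar>"
        by (simp only: abs_mult abs_of_nonneg)
      also have "\<dots> = K * s k" unfolding cid using K0 s0[of k] by (simp add: abs_mult power_abs)
      finally show ?thesis .
    qed
    ultimately show ?thesis using h by (simp add: has_bochner_integral_iff)
  qed
  define T where "T t k = (-1) ^ k / (fact k * Gamma (real k + \<nu> + 1)) * (t / 2) ^ (2 * k) * (t / 2) powr \<nu>" for t k
  have gT: "g k t = T t k * (t powr (2 * real N - \<nu>) * exp (- b * t\<^sup>2))" if t: "t > 0" for k t
  proof -
    have e1: "(t/2)^(2*k) = t^(2*k) / 4^k" by (simp add: power_divide power_mult)
    have e2: "(t/2) powr \<nu> = t powr \<nu> / 2 powr \<nu>" using t by (simp add: powr_divide)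
    have e3: "t powr \<nu> * t powr (2 * real N - \<nu>) = t^(2*N)"
      using t by (simp add: powr_add[symmetric] powr_realpow[symmetric])
    have e4: "t^(2*(N+k)) = t^(2*N) * t^(2*k)" by (simp add: power_add[symmetric] algebra_simps)
    show ?thesis unfolding g_def T_def c_def e1 e2 e4 e3[symmetric] using t
      by (simp add: field_simps)
  qed
  have pw: "(\<lambda>k. g k t) sums (indicator {0<..} t * (t powr (2 * real N - \<nu>) * besselJ \<nu> t * exp (- b * t\<^sup>2)))" for t
  proof (cases "t > 0")
    case False then show ?thesis by (simp add: g_def)
  next
    case True
    have "summable (T t)" using bessel_term_sums[OF \<nu>1 True] unfolding T_def
      by (rule summable_rabs_cancel)
    moreover have "besselJ \<nu> t = suminf (T t)" unfolding besselJ_def T_def by (rule refl)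
    ultimately have "T t sums besselJ \<nu> t" by (simp add: summable_sums)
    from sums_mult2[OF this, of "t powr (2 * real N - \<nu>) * exp (- b * t\<^sup>2)"]
    show ?thesis using True by (simp add: gT mult_ac)
  qed
  have pwn: "summable (\<lambda>k. norm (g k t))" for t
  proof (cases "t > 0")
    case False then show ?thesis by (simp add: g_def)
  next
    case True
    have "summable (\<lambda>k. \<bar>T t k\<bar> * \<bar>t powr (2 * real N - \<nu>) * exp (- b * t\<^sup>2)\<bar>)"
      using bessel_term_sums[OF \<nu>1 True] unfolding T_def by (rule summable_mult2)
    then show ?thesis using True by (simp add: gT abs_mult)
  qed
  have sn: "summable (\<lambda>k. integral\<^sup>L lborel (\<lambda>t. norm (g k t)))"
    unfolding gn s_def using beta_series_summable[of z a \<beta>] z0 a0 \<beta>1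
    by (intro summable_mult) auto
  have "(\<lambda>k. integral\<^sup>L lborel (g k)) sums (LINT t|lborel. (\<Sum>k. g k t))"
    by (rule sums_integral[OF gi _ sn]) (use pwn in auto)
  moreover have "(\<lambda>t. \<Sum>k. g k t) = (\<lambda>t. indicator {0<..} t * (t powr (2 * real N - \<nu>) * besselJ \<nu> t * exp (- b * t\<^sup>2)))"
    using pw by (simp add: sums_iff fun_eq_iff)
  ultimately have S1: "(\<lambda>k. (-1)^k * K * s k) sums G" unfolding gv G_def by simp
  have "(\<lambda>k. (-z)^k / fact k * Beta (a + real k) \<beta>) sums E"
    unfolding E_def using euler_sums[OF z0 a0] \<beta>1 by simp
  from sums_mult[OF this, of K] have S2': "(\<lambda>k. K * ((-z)^k / fact k * Beta (a + real k) \<beta>)) sums (K * E)" .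
  have "K * ((-z)^k / fact k * Beta (a + real k) \<beta>) = (-1)^k * K * s k" for k
  proof -
    have "(-z)^k = (-1)^k * z^k" by (rule power_minus)
    then show ?thesis unfolding s_def by simp
  qed
  with S2' have S2: "(\<lambda>k. (-1)^k * K * s k) sums (K * E)" by simp
  have GE: "G = K * E" using S1 S2 sums_unique2 by blast
  define P where "P = 2 powr (\<nu> - 2 * real N) * Gamma (\<nu> - real N + 1/2) / Gamma (real N + 1/2)"
  have PK: "P * K = z powr a / Gamma a"
  proof -
    have "(2::real) powr (\<nu> - 2 * real N) * 2 powr (2*real N - \<nu>) = 1"
      by (simp add: powr_add[symmetric])
    moreover have "Gamma \<beta> > 0" "Gamma a > 0" using \<beta>1 a0 by auto
    ultimately show ?thesis unfolding K_def P_def by (simp add: a_def \<beta>_def field_simps)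
  qed
  have EB: "0 \<le> z powr a * E" "z powr a * E \<le> Gamma a"
    using euler_bound[OF z0 a0 \<beta>1] unfolding E_def by auto
  have "P * G = z powr a * E / Gamma a"
    unfolding GE mult.assoc[symmetric] PK by simp
  moreover have "\<bar>z powr a * E / Gamma a\<bar> \<le> 1" using EB a0 by simp
  ultimately show ?thesis unfolding G_def P_def by simp
qed



lemma exp_int:
  fixes q :: real assumes q: "q > 0"
  shows "has_bochner_integral lborel (\<lambda>x. indicator {0<..} x * exp (- x * q)) (1 / q)"
proof -
  have h: "has_bochner_integral lborel (\<lambda>u. indicator {0<..} u * (q powr 1 * u powr (1-1) * exp(-q*u))) (Gamma 1)"
    by (rule gamma_scaled[OF q]) simp
  have "(\<lambda>u. indicator {0<..} u * (q powr 1 * u powr (1-1) * exp(-q*u))) = (\<lambda>u. q * (indicator {0<..} u * exp (- u * q)))"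
    using q by (auto simp: fun_eq_iff indicator_def mult_ac)
  with h have "has_bochner_integral lborel (\<lambda>u. q * (indicator {0<..} u * exp (- u * q))) 1" by simp
  from has_bochner_integral_mult_right[OF this, of "1/q"] show ?thesis using q by simp
qed

theorem mainTheorem12:
  fixes N :: nat
  shows "\<exists>C \<nu>0. \<forall>\<nu>::real. \<nu> \<ge> \<nu>0 \<longrightarrow> (\<forall>lam::real. lam > 0 \<longrightarrow>
    \<bar>2 powr (\<nu> - 2 * real N) * Gamma (\<nu> - real N + 1/2) / Gamma (real N + 1/2) *
      (LBINT t:{0<..}. t powr (2 * real N - \<nu>) * besselJ \<nu> t / (1 + (t / (lam * \<nu>))\<^sup>2))\<bar> \<le> C)"
proof (intro exI allI impI)
  fix \<nu> lam :: real
  assume \<nu>: "real N + 1 \<le> \<nu>" and lam: "lam > 0"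
  define A where "A = lam * \<nu>"
  have A: "A > 0" using \<nu> lam by (simp add: A_def)
  define P where "P = 2 powr (\<nu> - 2 * real N) * Gamma (\<nu> - real N + 1/2) / Gamma (real N + 1/2)"
  define f where "f t = t powr (2 * real N - \<nu>) * besselJ \<nu> t" for t
  define q where "q t = 1 + (t / A)\<^sup>2" for t
  have q0: "q t > 0" for t by (simp add: q_def add_pos_nonneg)
  have qne: "q t \<noteq> 0" for t using q0[of t] by simp
  define Fi where "Fi t = indicator {0<..} t * (f t / q t)" for t
  have LB: "(LBINT t:{0<..}. t powr (2 * real N - \<nu>) * besselJ \<nu> t / (1 + (t / (lam * \<nu>))\<^sup>2))
      = integral\<^sup>L lborel Fi"
    by (simp add: set_lebesgue_integral_def Fi_def[abs_def] f_def q_def A_def)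
  show "\<bar>P * (LBINT t:{0<..}. t powr (2 * real N - \<nu>) * besselJ \<nu> t / (1 + (t / (lam * \<nu>))\<^sup>2))\<bar> \<le> 1"
  proof (cases "integrable lborel Fi")
    case False
    then show ?thesis unfolding LB by (simp add: not_integrable_integral_eq)
  next
    case True
    define phi where "phi t = indicator {0<..} t * f t" for t
    have phim[measurable]: "phi \<in> borel_measurable borel"
    proof -
      have "(\<lambda>t. Fi t * q t) \<in> borel_measurable borel"
        using borel_measurable_integrable[OF True] unfolding q_def by measurable
      moreover have "(\<lambda>t. Fi t * q t) = phi" using qne by (simp add: fun_eq_iff Fi_def phi_def)
      ultimately show ?thesis by simp
    qed
    define H where "H t x = phi t * (indicator {0<..} x * exp (- x * q t))" for t x
    have Hm: "case_prod H \<in> borel_measurable (lborel \<Otimes>\<^sub>M lborel)"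
      unfolding H_def[abs_def] q_def by measurable
    have Ht: "has_bochner_integral lborel (H t) (Fi t)" for t
    proof -
      have "has_bochner_integral lborel (\<lambda>x. phi t * (indicator {0<..} x * exp (- x * q t))) (phi t * (1 / q t))"
        by (rule has_bochner_integral_mult_right[OF exp_int[OF q0]])
      moreover have "phi t * (1 / q t) = Fi t" by (simp add: phi_def Fi_def)
      ultimately show ?thesis by (simp add: H_def[abs_def])
    qed
    have Htn: "integral\<^sup>L lborel (\<lambda>x. \<bar>H t x\<bar>) = \<bar>Fi t\<bar>" for t
    proof -
      have "has_bochner_integral lborel (\<lambda>x. \<bar>phi t\<bar> * (indicator {0<..} x * exp (- x * q t))) (\<bar>phi t\<bar> * (1 / q t))"
        by (rule has_bochner_integral_mult_right[OF exp_int[OF q0]])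
      moreover have "(\<lambda>x. \<bar>H t x\<bar>) = (\<lambda>x. \<bar>phi t\<bar> * (indicator {0<..} x * exp (- x * q t)))"
        by (auto simp: fun_eq_iff H_def abs_mult indicator_def)
      moreover have "\<bar>phi t\<bar> * (1 / q t) = \<bar>Fi t\<bar>" using q0[of t]
        by (simp add: phi_def Fi_def abs_mult abs_divide)
      ultimately show ?thesis by (simp add: has_bochner_integral_iff)
    qed
    have Hint: "integrable (lborel \<Otimes>\<^sub>M lborel) (case_prod H)"
    proof (rule lborel_pair.Fubini_integrable[OF Hm])
      show "integrable lborel (\<lambda>t. LINT x|lborel. norm (case_prod H (t, x)))"
        using integrable_norm[OF True] by (simp add: Htn)
      show "AE t in lborel. integrable lborel (\<lambda>x. case_prod H (t, x))"
        using Ht by (simp add: has_bochner_integral_iff)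
    qed
    have Fub: "(LINT x|lborel. LINT t|lborel. H t x) = (LINT t|lborel. LINT x|lborel. H t x)"
      by (rule lborel_pair.Fubini_integral[OF Hint])
    have rhs: "(LINT t|lborel. LINT x|lborel. H t x) = integral\<^sup>L lborel Fi"
      using Ht by (simp add: has_bochner_integral_iff)
    define Gx where "Gx x = (LINT t|lborel. indicator {0<..} t * (t powr (2 * real N - \<nu>) * besselJ \<nu> t * exp (- (x / A\<^sup>2) * t\<^sup>2)))" for x
    have inner: "(LINT t|lborel. H t x) = indicator {0<..} x * exp (- x) * Gx x" for x
    proof -
      have "(\<lambda>t. H t x) = (\<lambda>t. (indicator {0<..} x * exp (- x)) * (indicator {0<..} t * (t powr (2 * real N - \<nu>) * besselJ \<nu> t * exp (- (x / A\<^sup>2) * t\<^sup>2))))"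
        using A by (auto simp: fun_eq_iff H_def phi_def f_def q_def power_divide field_simps exp_add[symmetric] exp_diff)
      then show ?thesis by (simp add: Gx_def)
    qed
    have gint: "integrable lborel (\<lambda>x. indicator {0<..} x * exp (- x) * Gx x)"
      using lborel_pair.integrable_snd[OF Hint] by (simp add: inner)
    have main: "P * integral\<^sup>L lborel Fi = (LINT x|lborel. indicator {0<..} x * exp (- x) * (P * Gx x))"
      using Fub rhs by (simp add: inner mult_ac)
    have bnd: "norm (indicator {0<..} x * exp (- x) * (P * Gx x)) \<le> indicator {0<..} x * exp (- x * 1)" for x
    proof (cases "x > 0")
      case True
      have "\<bar>P * Gx x\<bar> \<le> 1" unfolding P_def Gx_def
        by (rule key[OF \<nu>]) (use True A in simp)
      then show ?thesis using True by (simp add: abs_mult mult_left_le)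
    next
      case False then show ?thesis by simp
    qed
    have e1: "integrable lborel (\<lambda>x::real. indicator {0<..} x * exp (- x * 1))"
      and e1v: "integral\<^sup>L lborel (\<lambda>x::real. indicator {0<..} x * exp (- x * 1)) = 1"
      using exp_int[of 1] by (simp_all add: has_bochner_integral_iff)
    have "\<bar>P * integral\<^sup>L lborel Fi\<bar> \<le> (LINT x|lborel. norm (indicator {0<..} x * exp (- x) * (P * Gx x)))"
      unfolding main using integral_norm_bound[of lborel "\<lambda>x. indicator {0<..} x * exp (- x) * (P * Gx x)"]
      by (simp only: real_norm_def)
    also have "\<dots> \<le> (LINT x|lborel. indicator {0<..} x * exp (- x * 1))"
    proof (rule integral_mono)
      show "integrable lborel (\<lambda>x. norm (indicator {0<..} x * exp (- x) * (P * Gx x)))"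
        using integrable_mult_right[OF gint, of P] by (intro integrable_norm) (simp add: mult_ac)
    qed (use e1 bnd in auto)
    finally show ?thesis unfolding LB e1v by (simp add: P_def)
  qed
qed

end
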